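(* Let $f^+,f^-,f^\circ:[0,1]\to[0,1]$ satisfy $f^+(0)=f^-(0)=f^\circ(0)=0$, let $x$ be a feasible LP solution, and let $\alpha>0$. If $ALG(uvw)\le\alpha\, LP(uvw)$ for every $u,v,w\in V$, then for every step $t$ of the pivot rounding algorithm, $\mathbb{E}[ALG_t]\le\alpha\,\mathbb{E}[LP_t]$. Consequently the expected cost of the clustering returned by the algorithm is at most $\alpha$ times the LP objective value of $x$.
   Context: Setting: finite vertex set $V$; every pair of distinct vertices is a positive edge ($E^+$), a negative edge ($E^-$), or not an edge. The cost of a clustering (partition of $V$) is the number of positive edges with endpoints in different clusters plus the number of negative edges with endpoints in the same cluster. LP: variables $x_{uv}=x_{vu}\in[0,1]$, $x_{uu}=0$, $x_{uv}+x_{vw}\ge x_{uw}$ for all $u,v,w$; objective $\sum_{E^+}x_{uv}+\sum_{E^-}(1-x_{uv})$. For $u,w\in V$ let $p_{uw}=f^+(x_{uw})$, $f^-(x_{uw})$, or $f^\circ(x_{uw})$ according as $(u,w)$ is a positive edge, negative edge, or non-edge (so $p_{uu}=0$). Pivot rounding algorithm: $V_0=V$; while $V_t\ne\emptyset$: choose pivot $w_t\in V_t$ uniformly at random, put each $u\in V_t$ in $S_t$ independently with probability $1-p_{uw_t}$, set $V_{t+1}=V_t\setminus S_t$; output the $S_t$. $ALG_t$ is the number of positive edges $(u,v)$ with $u,v\in V_t$ and exactly one endpoint in $S_t$ plus the number of negative edges $(u,v)$ with $u,v\in V_t$ and both endpoints in $S_t$; $LP_t$ is the sum over positive edges $(u,v)$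 with $u,v\in V_t$ and at least one endpoint in $S_t$ of $x_{uv}$, plus the sum over such negative edges of $1-x_{uv}$ (with $LP_t=ALG_t=0$ after termination). For $u,v,w\in V$ define $e.cost_w(u,v)=p_{uw}(1-p_{vw})+(1-p_{uw})p_{vw}$ if $(u,v)\in E^+$, $(1-p_{uw})(1-p_{vw})$ if $(u,v)\in E^-$, $0$ otherwise; $e.lp_w(u,v)=(1-p_{uw}p_{vw})x_{uv}$ if $(u,v)\in E^+$, $(1-p_{uw}p_{vw})(1-x_{uv})$ if $(u,v)\in E^-$, $0$ otherwise. These are also defined for $u=v$: each pair $(u,u)$ is treated either as a non-edge or as a positive edge (positive self-loop; this is the convention used for complete graphs). Set $ALG(uvw)=e.cost_w(u,v)+e.cost_v(w,u)+e.cost_u(v,w)$ and $LP(uvw)=e.lp_w(u,v)+e.lp_v(w,u)+e.lp_u(v,w)$. *)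

theory Defs
  imports "HOL-Probability.Probability"
begin

text \<open>Edges: pos u v / neg u v are symmetric relations on the vertex set (ordered-pair
  representation of undirected edges). Sums over edges are sums over ordered pairs of
  distinct vertices divided by 2.\<close>

definition offdiag :: "'a set \<Rightarrow> ('a \<times> 'a) set" where
  "offdiag U = {(u,v). u \<in> U \<and> v \<in> U \<and> u \<noteq> v}"

definition lp_feasible :: "'a set \<Rightarrow> ('a \<Rightarrow> 'a \<Rightarrow> real) \<Rightarrow> bool" where
  "lp_feasible V x \<longleftrightarrow>
     (\<forall>u\<in>V. \<forall>v\<in>V. x u v = x v u \<and> 0 \<le> x u v \<and> x u v \<le> 1) \<and>
     (\<forall>u\<in>V. x u u = 0) \<and>
     (\<forall>u\<in>V. \<forall>v\<in>V. \<forall>w\<in>V. x u v + x v w \<ge> x u w)"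

definition lp_obj :: "('a \<Rightarrow> 'a \<Rightarrow> bool) \<Rightarrow> ('a \<Rightarrow> 'a \<Rightarrow> bool) \<Rightarrow> ('a \<Rightarrow> 'a \<Rightarrow> real) \<Rightarrow> 'a set \<Rightarrow> real" where
  "lp_obj pos neg x V =
     (\<Sum>(u,v)\<in>offdiag V. if pos u v then x u v else if neg u v then 1 - x u v else 0) / 2"

definition prob_p :: "(real \<Rightarrow> real) \<Rightarrow> (real \<Rightarrow> real) \<Rightarrow> (real \<Rightarrow> real) \<Rightarrow>
    ('a \<Rightarrow> 'a \<Rightarrow> bool) \<Rightarrow> ('a \<Rightarrow> 'a \<Rightarrow> bool) \<Rightarrow> ('a \<Rightarrow> 'a \<Rightarrow> real) \<Rightarrow> 'a \<Rightarrow> 'a \<Rightarrow> real" where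
  "prob_p fp fm fo pos neg x u w =
     (if pos u w then fp (x u w) else if neg u w then fm (x u w) else fo (x u w))"

definition pivot_step :: "('a \<Rightarrow> 'a \<Rightarrow> real) \<Rightarrow> 'a set \<Rightarrow> 'a set pmf" where
  "pivot_step p U = (if U = {} then return_pmf {} else
     pmf_of_set U \<bind> (\<lambda>w.
     Pi_pmf U False (\<lambda>u. bernoulli_pmf (1 - p u w)) \<bind> (\<lambda>b.
     return_pmf {u \<in> U. b u})))"

text \<open>State after t steps: (V_t, clusters produced so far).\<close>
primrec pivot_run :: "('a \<Rightarrow> 'a \<Rightarrow> real) \<Rightarrow> 'a set \<Rightarrow> nat \<Rightarrow> ('a set \<times> 'a set set) pmf" where
  "pivot_run p V 0 = return_pmf (V, {})"
| "pivot_run p V (Suc t) = pivot_run p V t \<bind> (\<lambda>(U, C).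
     if U = {} then return_pmf (U, C)
     else map_pmf (\<lambda>S. (U - S, insert S C)) (pivot_step p U))"

definition alg_step :: "('a \<Rightarrow> 'a \<Rightarrow> bool) \<Rightarrow> ('a \<Rightarrow> 'a \<Rightarrow> bool) \<Rightarrow> 'a set \<Rightarrow> 'a set \<Rightarrow> real" where
  "alg_step pos neg U S =
     (\<Sum>(u,v)\<in>offdiag U.
        (if pos u v \<and> ((u \<in> S) \<noteq> (v \<in> S)) then 1 else 0)
      + (if neg u v \<and> u \<in> S \<and> v \<in> S then 1 else 0)) / 2"

definition lp_step :: "('a \<Rightarrow> 'a \<Rightarrow> bool) \<Rightarrow> ('a \<Rightarrow> 'a \<Rightarrow> bool) \<Rightarrow> ('a \<Rightarrow> 'a \<Rightarrow> real) \<Rightarrow> 'a set \<Rightarrow> 'a set \<Rightarrow> real" where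
  "lp_step pos neg x U S =
     (\<Sum>(u,v)\<in>offdiag U.
        if u \<in> S \<or> v \<in> S then
          (if pos u v then x u v else if neg u v then 1 - x u v else 0)
        else 0) / 2"

definition exp_alg :: "('a \<Rightarrow> 'a \<Rightarrow> real) \<Rightarrow> ('a \<Rightarrow> 'a \<Rightarrow> bool) \<Rightarrow> ('a \<Rightarrow> 'a \<Rightarrow> bool) \<Rightarrow> 'a set \<Rightarrow> nat \<Rightarrow> real" where
  "exp_alg p pos neg V t =
     measure_pmf.expectation (pivot_run p V t)
       (\<lambda>(U, C). measure_pmf.expectation (pivot_step p U) (\<lambda>S. alg_step pos neg U S))"

definition exp_lp :: "('a \<Rightarrow> 'a \<Rightarrow> real) \<Rightarrow> ('a \<Rightarrow> 'a \<Rightarrow> bool) \<Rightarrow> ('a \<Rightarrow> 'a \<Rightarrow> bool) \<Rightarrow> ('a \<Rightarrow> 'a \<Rightarrow> real) \<Rightarrow> 'a set \<Rightarrow> nat \<Rightarrow> real" where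
  "exp_lp p pos neg x V t =
     measure_pmf.expectation (pivot_run p V t)
       (\<lambda>(U, C). measure_pmf.expectation (pivot_step p U) (\<lambda>S. lp_step pos neg x U S))"

text \<open>Output clustering: after card V steps the algorithm has terminated
  (each step removes at least the pivot).\<close>
definition pivot_output :: "('a \<Rightarrow> 'a \<Rightarrow> real) \<Rightarrow> 'a set \<Rightarrow> 'a set set pmf" where
  "pivot_output p V = map_pmf snd (pivot_run p V (card V))"

definition cluster_cost :: "('a \<Rightarrow> 'a \<Rightarrow> bool) \<Rightarrow> ('a \<Rightarrow> 'a \<Rightarrow> bool) \<Rightarrow> 'a set \<Rightarrow> 'a set set \<Rightarrow> real" where
  "cluster_cost pos neg V C =
     (\<Sum>(u,v)\<in>offdiag V.
        (if pos u v \<and> \<not> (\<exists>S\<in>C. u \<in> S \<and> v \<in> S) then 1 else 0)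
      + (if neg u v \<and> (\<exists>S\<in>C. u \<in> S \<and> v \<in> S) then 1 else 0)) / 2"

definition ecost :: "('a \<Rightarrow> 'a \<Rightarrow> real) \<Rightarrow> ('a \<Rightarrow> 'a \<Rightarrow> bool) \<Rightarrow> ('a \<Rightarrow> 'a \<Rightarrow> bool) \<Rightarrow> 'a \<Rightarrow> 'a \<Rightarrow> 'a \<Rightarrow> real" where
  "ecost p pos neg w u v =
     (if pos u v then p u w * (1 - p v w) + (1 - p u w) * p v w
      else if neg u v then (1 - p u w) * (1 - p v w) else 0)"

definition elp :: "('a \<Rightarrow> 'a \<Rightarrow> real) \<Rightarrow> ('a \<Rightarrow> 'a \<Rightarrow> bool) \<Rightarrow> ('a \<Rightarrow> 'a \<Rightarrow> bool) \<Rightarrow> ('a \<Rightarrow> 'a \<Rightarrow> real) \<Rightarrow> 'a \<Rightarrow> 'a \<Rightarrow> 'a \<Rightarrow> real" where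
  "elp p pos neg x w u v =
     (if pos u v then (1 - p u w * p v w) * x u v
      else if neg u v then (1 - p u w * p v w) * (1 - x u v) else 0)"

definition ALG3 :: "('a \<Rightarrow> 'a \<Rightarrow> real) \<Rightarrow> ('a \<Rightarrow> 'a \<Rightarrow> bool) \<Rightarrow> ('a \<Rightarrow> 'a \<Rightarrow> bool) \<Rightarrow> 'a \<Rightarrow> 'a \<Rightarrow> 'a \<Rightarrow> real" where
  "ALG3 p pos neg u v w = ecost p pos neg w u v + ecost p pos neg v w u + ecost p pos neg u v w"

definition LP3 :: "('a \<Rightarrow> 'a \<Rightarrow> real) \<Rightarrow> ('a \<Rightarrow> 'a \<Rightarrow> bool) \<Rightarrow> ('a \<Rightarrow> 'a \<Rightarrow> bool) \<Rightarrow> ('a \<Rightarrow> 'a \<Rightarrow> real) \<Rightarrow> 'a \<Rightarrow> 'a \<Rightarrow> 'a \<Rightarrow> real" where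
  "LP3 p pos neg x u v w = elp p pos neg x w u v + elp p pos neg x v w u + elp p pos neg x u v w"

end

theory Submission imports Defs begin


lemma Pi_pair_proj:
  assumes "finite U" "u \<in> U" "v \<in> U" "u \<noteq> v"
  shows "map_pmf (\<lambda>b. (b u, b v)) (Pi_pmf U d B) = pair_pmf (B u) (B v)"
proof -
  have sub: "{u,v} \<subseteq> U" using assms by auto
  have "map_pmf (\<lambda>b. (b u, b v)) (Pi_pmf U d B) = map_pmf (\<lambda>b. (b u, b v)) (Pi_pmf {u,v} d B)"
    by (subst Pi_pmf_subset[OF assms(1) sub]) (simp add: pmf.map_comp o_def)
  also have "Pi_pmf {u,v} d B = map_pmf (\<lambda>(y,f). f(u:=y)) (pair_pmf (B u) (Pi_pmf {v} d B))"
    using assms by (subst Pi_pmf_insert) auto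
  also have "Pi_pmf {v} d B = map_pmf (\<lambda>a b. if b = v then a else d) (B v)"
    by (rule Pi_pmf_singleton)
  finally show ?thesis using assms(4)
    by (simp add: pmf.map_comp o_def pair_map_pmf2 case_prod_unfold map_pmf_ident[unfolded id_def])
qed


lemma sum_bool2: "(\<Sum>a\<in>(UNIV::(bool\<times>bool) set). g a) = g (True,True) + g (True,False) + g (False,True) + g (False,False)"
proof -
  have "(UNIV::(bool\<times>bool) set) = {(True,True),(True,False),(False,True),(False,False)}" by auto
  show ?thesis unfolding \<open>UNIV = _\<close> by (simp add: add.assoc)
qed

lemma exp_pair_bern:
  fixes \<phi> :: "bool \<Rightarrow> bool \<Rightarrow> real"
  assumes "0 \<le> r1" "r1 \<le> 1" "0 \<le> r2" "r2 \<le> 1"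
  shows "measure_pmf.expectation (pair_pmf (bernoulli_pmf r1) (bernoulli_pmf r2)) (\<lambda>(a,b). \<phi> a b)
     = r1 * r2 * \<phi> True True + r1 * (1 - r2) * \<phi> True False + (1 - r1) * r2 * \<phi> False True
       + (1 - r1) * (1 - r2) * \<phi> False False"
  by (subst integral_measure_pmf_real[where A=UNIV]) (auto simp: sum_bool2 pmf_pair assms)

lemma exp_Pi_pair:
  fixes \<phi> :: "bool \<Rightarrow> bool \<Rightarrow> real"
  assumes "finite U" "u \<in> U" "v \<in> U" "u \<noteq> v"
    and r: "\<And>y. y \<in> U \<Longrightarrow> 0 \<le> r y \<and> r y \<le> 1"
  shows "measure_pmf.expectation (Pi_pmf U d (\<lambda>y. bernoulli_pmf (r y))) (\<lambda>b. \<phi> (b u) (b v))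
     = r u * r v * \<phi> True True + r u * (1 - r v) * \<phi> True False + (1 - r u) * r v * \<phi> False True
       + (1 - r u) * (1 - r v) * \<phi> False False" (is "_ = ?R")
proof -
  have "measure_pmf.expectation (Pi_pmf U d (\<lambda>y. bernoulli_pmf (r y))) (\<lambda>b. \<phi> (b u) (b v))
     = measure_pmf.expectation (map_pmf (\<lambda>b. (b u, b v)) (Pi_pmf U d (\<lambda>y. bernoulli_pmf (r y)))) (\<lambda>(a,b). \<phi> a b)"
    by simp
  also have "\<dots> = measure_pmf.expectation (pair_pmf (bernoulli_pmf (r u)) (bernoulli_pmf (r v))) (\<lambda>(a,b). \<phi> a b)"
    by (subst Pi_pair_proj[OF assms(1-4)]) simp
  also have "\<dots> = ?R" using r[OF assms(2)] r[OF assms(3)] by (intro exp_pair_bern) auto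
  finally show ?thesis .
qed


lemma finite_Pi_bern: "finite U \<Longrightarrow> finite (set_pmf (Pi_pmf U False (\<lambda>u. bernoulli_pmf (r u))))"
  by (rule finite_subset[OF set_Pi_pmf_subset']) (auto intro!: finite_PiE_dflt)

lemma exp_step:
  fixes h :: "'a set \<Rightarrow> real"
  assumes "finite U" "U \<noteq> {}"
  shows "measure_pmf.expectation (pivot_step p U) h =
    (\<Sum>w\<in>U. measure_pmf.expectation (Pi_pmf U False (\<lambda>u. bernoulli_pmf (1 - p u w))) (\<lambda>b. h {u\<in>U. b u})) / card U"
proof -
  have "pivot_step p U = pmf_of_set U \<bind> (\<lambda>w. map_pmf (\<lambda>b. {u\<in>U. b u}) (Pi_pmf U False (\<lambda>u. bernoulli_pmf (1 - p u w))))"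
    using assms by (simp add: pivot_step_def map_pmf_def)
  also have "measure_pmf.expectation \<dots> h = (\<Sum>w\<in>U. measure_pmf.expectation (map_pmf (\<lambda>b. {u\<in>U. b u}) (Pi_pmf U False (\<lambda>u. bernoulli_pmf (1 - p u w)))) h /\<^sub>R real (card U))"
    using assms by (intro pmf_expectation_bind_pmf_of_set) (auto intro: finite_Pi_bern)
  finally show ?thesis by (simp add: sum_divide_distrib divide_inverse mult.commute sum_distrib_left)
qed

lemma set_step_sub:
  assumes "finite U" "S \<in> set_pmf (pivot_step p U)"
  shows "S \<subseteq> U"
  using assms by (auto simp: pivot_step_def split: if_splits)

lemma set_step_ne:
  assumes "finite U" "U \<noteq> {}" "\<And>w. w \<in> U \<Longrightarrow> p w w = 0" "S \<in> set_pmf (pivot_step p U)"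
  shows "S \<noteq> {}"
proof -
  from assms obtain w b where w: "w \<in> U" and b: "b \<in> set_pmf (Pi_pmf U False (\<lambda>u. bernoulli_pmf (1 - p u w)))"
     and S: "S = {u\<in>U. b u}"
    by (auto simp: pivot_step_def)
  have "b w \<in> set_pmf (bernoulli_pmf (1 - p w w))"
    using b w set_Pi_pmf_subset'[OF assms(1)] by (force simp: PiE_dflt_def)
  then have "b w" using assms(3)[OF w] by (cases "b w") (auto simp: set_pmf_iff)
  then show ?thesis using S w by auto
qed

lemma finite_set_step: "finite U \<Longrightarrow> finite (set_pmf (pivot_step p U))"
  by (rule finite_subset[of _ "Pow U"]) (auto dest: set_step_sub)


lemma exp_Pi_alg:
  assumes fin: "finite U"
    and pr: "\<And>u. u \<in> U \<Longrightarrow> 0 \<le> p u w \<and> p u w \<le> 1"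
    and disj: "\<And>u v. u \<in> U \<Longrightarrow> v \<in> U \<Longrightarrow> \<not> (pos u v \<and> neg u v)"
  shows "measure_pmf.expectation (Pi_pmf U False (\<lambda>u. bernoulli_pmf (1 - p u w)))
           (\<lambda>b. alg_step pos neg U {u\<in>U. b u})
       = (\<Sum>(u,v)\<in>offdiag U. ecost p pos neg w u v) / 2"
proof -
  let ?P = "Pi_pmf U False (\<lambda>u. bernoulli_pmf (1 - p u w))"
  define \<phi> where "\<phi> = (\<lambda>(u,v) a c. (if pos u v \<and> a \<noteq> c then 1 else 0) + (if neg u v \<and> a \<and> c then 1 else 0) :: real)"
  have eq: "alg_step pos neg U {u\<in>U. b u} = (\<Sum>z\<in>offdiag U. \<phi> z (b (fst z)) (b (snd z))) / 2" for b
    unfolding alg_step_def \<phi>_def by (intro arg_cong2[where f="(/)"] sum.cong refl) (auto simp: offdiag_def)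
  have int: "integrable ?P f" for f :: "_ \<Rightarrow> real"
    by (intro integrable_measure_pmf_finite finite_Pi_bern fin)
  have "measure_pmf.expectation ?P (\<lambda>b. alg_step pos neg U {u\<in>U. b u})
      = (\<Sum>z\<in>offdiag U. measure_pmf.expectation ?P (\<lambda>b. \<phi> z (b (fst z)) (b (snd z)))) / 2"
    unfolding eq by (simp add: int)
  also have "\<dots> = (\<Sum>(u,v)\<in>offdiag U. ecost p pos neg w u v) / 2"
  proof (intro arg_cong2[where f="(/)"] sum.cong refl)
    fix z assume z: "z \<in> offdiag U"
    obtain u v where uv: "z = (u,v)" by (cases z)
    have u: "u \<in> U" and v: "v \<in> U" and ne: "u \<noteq> v" using z uv by (auto simp: offdiag_def)
    have "measure_pmf.expectation ?P (\<lambda>b. \<phi> z (b (fst z)) (b (snd z)))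
       = (1 - p u w) * (1 - p v w) * \<phi> z True True + (1 - p u w) * (1 - (1 - p v w)) * \<phi> z True False
         + (1 - (1 - p u w)) * (1 - p v w) * \<phi> z False True + (1 - (1 - p u w)) * (1 - (1 - p v w)) * \<phi> z False False"
      unfolding uv fst_conv snd_conv
      by (rule exp_Pi_pair[OF fin u v ne]) (use pr in auto)
    also have "\<dots> = (case z of (u,v) \<Rightarrow> ecost p pos neg w u v)"
      using disj[OF u v] by (auto simp: uv \<phi>_def ecost_def algebra_simps)
    finally show "measure_pmf.expectation ?P (\<lambda>b. \<phi> z (b (fst z)) (b (snd z))) = (case z of (u,v) \<Rightarrow> ecost p pos neg w u v)" .
  qed
  finally show ?thesis .
qed

lemma exp_Pi_lp:
  assumes fin: "finite U"
    and pr: "\<And>u. u \<in> U \<Longrightarrow> 0 \<le> p u w \<and> p u w \<le> 1"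
  shows "measure_pmf.expectation (Pi_pmf U False (\<lambda>u. bernoulli_pmf (1 - p u w)))
           (\<lambda>b. lp_step pos neg x U {u\<in>U. b u})
       = (\<Sum>(u,v)\<in>offdiag U. elp p pos neg x w u v) / 2"
proof -
  let ?P = "Pi_pmf U False (\<lambda>u. bernoulli_pmf (1 - p u w))"
  define \<phi> where "\<phi> = (\<lambda>(u,v) a c. if a \<or> c then (if pos u v then x u v else if neg u v then 1 - x u v else 0) else 0 :: real)"
  have eq: "lp_step pos neg x U {u\<in>U. b u} = (\<Sum>z\<in>offdiag U. \<phi> z (b (fst z)) (b (snd z))) / 2" for b
    unfolding lp_step_def \<phi>_def by (intro arg_cong2[where f="(/)"] sum.cong refl) (auto simp: offdiag_def)
  have int: "integrable ?P f" for f :: "_ \<Rightarrow> real"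
    by (intro integrable_measure_pmf_finite finite_Pi_bern fin)
  have "measure_pmf.expectation ?P (\<lambda>b. lp_step pos neg x U {u\<in>U. b u})
      = (\<Sum>z\<in>offdiag U. measure_pmf.expectation ?P (\<lambda>b. \<phi> z (b (fst z)) (b (snd z)))) / 2"
    unfolding eq by (simp add: int)
  also have "\<dots> = (\<Sum>(u,v)\<in>offdiag U. elp p pos neg x w u v) / 2"
  proof (intro arg_cong2[where f="(/)"] sum.cong refl)
    fix z assume z: "z \<in> offdiag U"
    obtain u v where uv: "z = (u,v)" by (cases z)
    have u: "u \<in> U" and v: "v \<in> U" and ne: "u \<noteq> v" using z uv by (auto simp: offdiag_def)
    have "measure_pmf.expectation ?P (\<lambda>b. \<phi> z (b (fst z)) (b (snd z)))
       = (1 - p u w) * (1 - p v w) * \<phi> z True True + (1 - p u w) * (1 - (1 - p v w)) * \<phi> z True False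
         + (1 - (1 - p u w)) * (1 - p v w) * \<phi> z False True + (1 - (1 - p u w)) * (1 - (1 - p v w)) * \<phi> z False False"
      unfolding uv fst_conv snd_conv
      by (rule exp_Pi_pair[OF fin u v ne]) (use pr in auto)
    also have "\<dots> = (case z of (u,v) \<Rightarrow> elp p pos neg x w u v)"
      by (auto simp: uv \<phi>_def elp_def algebra_simps)
    finally show "measure_pmf.expectation ?P (\<lambda>b. \<phi> z (b (fst z)) (b (snd z))) = (case z of (u,v) \<Rightarrow> elp p pos neg x w u v)" .
  qed
  finally show ?thesis .
qed


lemma sum3_cyc:
  fixes g :: "'a \<Rightarrow> 'a \<Rightarrow> 'a \<Rightarrow> real"
  shows "(\<Sum>a\<in>U. \<Sum>b\<in>U. \<Sum>c\<in>U. g b c a) = (\<Sum>a\<in>U. \<Sum>b\<in>U. \<Sum>c\<in>U. g a b c)"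
proof -
  have "(\<Sum>a\<in>U. \<Sum>b\<in>U. \<Sum>c\<in>U. g b c a) = (\<Sum>b\<in>U. \<Sum>a\<in>U. \<Sum>c\<in>U. g b c a)"
    by (rule sum.swap)
  also have "\<dots> = (\<Sum>b\<in>U. \<Sum>c\<in>U. \<Sum>a\<in>U. g b c a)"
    by (intro sum.cong refl sum.swap)
  finally show ?thesis .
qed

lemma triple_ineq:
  fixes E L :: "'a \<Rightarrow> 'a \<Rightarrow> 'a \<Rightarrow> real"
  assumes "\<And>u v w. u \<in> U \<Longrightarrow> v \<in> U \<Longrightarrow> w \<in> U \<Longrightarrow> E u v w + E w u v + E v w u \<le> \<alpha> * (L u v w + L w u v + L v w u)"
  shows "(\<Sum>w\<in>U. \<Sum>u\<in>U. \<Sum>v\<in>U. E u v w) \<le> \<alpha> * (\<Sum>w\<in>U. \<Sum>u\<in>U. \<Sum>v\<in>U. L u v w)"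
proof -
  have c1: "(\<Sum>w\<in>U. \<Sum>u\<in>U. \<Sum>v\<in>U. F w u v) = (\<Sum>w\<in>U. \<Sum>u\<in>U. \<Sum>v\<in>U. F u v w)" for F :: "'a \<Rightarrow> 'a \<Rightarrow> 'a \<Rightarrow> real"
    by (rule sum3_cyc[symmetric])
  have c2: "(\<Sum>w\<in>U. \<Sum>u\<in>U. \<Sum>v\<in>U. F v w u) = (\<Sum>w\<in>U. \<Sum>u\<in>U. \<Sum>v\<in>U. F u v w)" for F :: "'a \<Rightarrow> 'a \<Rightarrow> 'a \<Rightarrow> real"
    by (rule sum3_cyc)
  have "3 * (\<Sum>w\<in>U. \<Sum>u\<in>U. \<Sum>v\<in>U. E u v w) = (\<Sum>w\<in>U. \<Sum>u\<in>U. \<Sum>v\<in>U. E u v w + E w u v + E v w u)"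
    by (simp add: sum.distrib c1[of E] c2[of E])
  also have "\<dots> \<le> (\<Sum>w\<in>U. \<Sum>u\<in>U. \<Sum>v\<in>U. \<alpha> * (L u v w + L w u v + L v w u))"
    by (intro sum_mono assms) auto
  also have "\<dots> = 3 * (\<alpha> * (\<Sum>w\<in>U. \<Sum>u\<in>U. \<Sum>v\<in>U. L u v w))"
    by (simp add: sum.distrib c1[of L] c2[of L] sum_distrib_left[symmetric] algebra_simps)
  finally show ?thesis by simp
qed


lemma offdiag_sub: "offdiag U \<subseteq> U \<times> U" by (auto simp: offdiag_def)

lemma ecost_nonneg:
  assumes "0 \<le> p u w" "p u w \<le> 1" "0 \<le> p v w" "p v w \<le> 1"
  shows "0 \<le> ecost p pos neg w u v"
  using assms by (auto simp: ecost_def intro!: add_nonneg_nonneg mult_nonneg_nonneg)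

lemma step_ineq:
  assumes fin: "finite U"
    and pr: "\<And>u w. u \<in> U \<Longrightarrow> w \<in> U \<Longrightarrow> 0 \<le> p u w \<and> p u w \<le> 1"
    and disj: "\<And>u v. u \<in> U \<Longrightarrow> v \<in> U \<Longrightarrow> \<not> (pos u v \<and> neg u v)"
    and diag: "\<And>u w. u \<in> U \<Longrightarrow> w \<in> U \<Longrightarrow> elp p pos neg x w u u = 0"
    and tri: "\<And>u v w. u \<in> U \<Longrightarrow> v \<in> U \<Longrightarrow> w \<in> U \<Longrightarrow>
       ALG3 p pos neg u v w \<le> \<alpha> * LP3 p pos neg x u v w"
  shows "measure_pmf.expectation (pivot_step p U) (alg_step pos neg U)
      \<le> \<alpha> * measure_pmf.expectation (pivot_step p U) (lp_step pos neg x U)"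
proof (cases "U = {}")
  case True
  then show ?thesis by (simp add: pivot_step_def alg_step_def lp_step_def offdiag_def)
next
  case ne: False
  have A: "measure_pmf.expectation (pivot_step p U) (alg_step pos neg U)
      = (\<Sum>w\<in>U. (\<Sum>(u,v)\<in>offdiag U. ecost p pos neg w u v) / 2) / card U"
    unfolding exp_step[OF fin ne]
    by (intro arg_cong2[where f="(/)"] sum.cong refl exp_Pi_alg fin) (use pr disj in auto)
  have L: "measure_pmf.expectation (pivot_step p U) (lp_step pos neg x U)
      = (\<Sum>w\<in>U. (\<Sum>(u,v)\<in>offdiag U. elp p pos neg x w u v) / 2) / card U"
    unfolding exp_step[OF fin ne]
    by (intro arg_cong2[where f="(/)"] sum.cong refl exp_Pi_lp fin) (use pr in auto)
  have e1: "(\<Sum>(u,v)\<in>offdiag U. ecost p pos neg w u v) \<le> (\<Sum>u\<in>U. \<Sum>v\<in>U. ecost p pos neg w u v)"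
    if w: "w \<in> U" for w
  proof -
    have "(\<Sum>(u,v)\<in>offdiag U. ecost p pos neg w u v) \<le> (\<Sum>(u,v)\<in>U \<times> U. ecost p pos neg w u v)"
      by (rule sum_mono2) (use fin offdiag_sub in auto, auto intro!: ecost_nonneg simp: pr w)
    also have "\<dots> = (\<Sum>u\<in>U. \<Sum>v\<in>U. ecost p pos neg w u v)"
      by (rule sum.cartesian_product[symmetric])
    finally show ?thesis .
  qed
  have l1: "(\<Sum>(u,v)\<in>offdiag U. elp p pos neg x w u v) = (\<Sum>u\<in>U. \<Sum>v\<in>U. elp p pos neg x w u v)"
    if w: "w \<in> U" for w
  proof -
    have "(\<Sum>(u,v)\<in>offdiag U. elp p pos neg x w u v) = (\<Sum>(u,v)\<in>U \<times> U. elp p pos neg x w u v)"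
      by (rule sum.mono_neutral_left) (use fin offdiag_sub in auto, auto simp: offdiag_def diag w)
    also have "\<dots> = (\<Sum>u\<in>U. \<Sum>v\<in>U. elp p pos neg x w u v)"
      by (rule sum.cartesian_product[symmetric])
    finally show ?thesis .
  qed
  have key: "(\<Sum>w\<in>U. \<Sum>(u,v)\<in>offdiag U. ecost p pos neg w u v) \<le> \<alpha> * (\<Sum>w\<in>U. \<Sum>(u,v)\<in>offdiag U. elp p pos neg x w u v)"
  proof -
    have "(\<Sum>w\<in>U. \<Sum>(u,v)\<in>offdiag U. ecost p pos neg w u v) \<le> (\<Sum>w\<in>U. \<Sum>u\<in>U. \<Sum>v\<in>U. ecost p pos neg w u v)"
      by (intro sum_mono e1)
    also have "\<dots> \<le> \<alpha> * (\<Sum>w\<in>U. \<Sum>u\<in>U. \<Sum>v\<in>U. elp p pos neg x w u v)"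
      by (rule triple_ineq[where E="\<lambda>u v w. ecost p pos neg w u v" and L="\<lambda>u v w. elp p pos neg x w u v"])
         (use tri in \<open>simp add: ALG3_def LP3_def\<close>)
    also have "\<dots> = \<alpha> * (\<Sum>w\<in>U. \<Sum>(u,v)\<in>offdiag U. elp p pos neg x w u v)"
      by (simp add: l1)
    finally show ?thesis .
  qed
  have "(\<Sum>w\<in>U. (\<Sum>(u,v)\<in>offdiag U. ecost p pos neg w u v) / 2) / card U
     = (\<Sum>w\<in>U. \<Sum>(u,v)\<in>offdiag U. ecost p pos neg w u v) / (2 * card U)"
    by (simp add: sum_divide_distrib[symmetric])
  also have "\<dots> \<le> \<alpha> * (\<Sum>w\<in>U. \<Sum>(u,v)\<in>offdiag U. elp p pos neg x w u v) / (2 * card U)"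
    by (intro divide_right_mono key) auto
  also have "\<dots> = \<alpha> * ((\<Sum>w\<in>U. (\<Sum>(u,v)\<in>offdiag U. elp p pos neg x w u v) / 2) / card U)"
    by (simp add: sum_divide_distrib[symmetric])
  finally show ?thesis unfolding A L .
qed


lemma run_inv:
  assumes finV: "finite V" and pd: "\<And>w. w \<in> V \<Longrightarrow> p w w = 0"
  shows "s \<in> set_pmf (pivot_run p V t) \<Longrightarrow> fst s \<subseteq> V \<and> (\<forall>T\<in>snd s. T \<subseteq> V \<and> T \<inter> fst s = {})
           \<and> card (fst s) \<le> card V - t"
proof (induction t arbitrary: s)
  case 0
  then show ?case by simp
next
  case (Suc t)
  from Suc.prems obtain U C where UC: "(U,C) \<in> set_pmf (pivot_run p V t)"
    and s: "s \<in> set_pmf (if U = {} then return_pmf (U, C) else map_pmf (\<lambda>S. (U - S, insert S C)) (pivot_step p U))"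
    by auto
  have IH: "U \<subseteq> V" "\<forall>T\<in>C. T \<subseteq> V \<and> T \<inter> U = {}" "card U \<le> card V - t"
    using Suc.IH[OF UC] by auto
  have finU: "finite U" using IH(1) finV by (rule finite_subset)
  show ?case
  proof (cases "U = {}")
    case True
    then show ?thesis using s IH by auto
  next
    case False
    with s obtain S where S: "S \<in> set_pmf (pivot_step p U)" and sS: "s = (U - S, insert S C)" by auto
    have SU: "S \<subseteq> U" by (rule set_step_sub[OF finU S])
    have Sne: "S \<noteq> {}" by (rule set_step_ne[OF finU False _ S]) (use pd IH(1) in auto)
    have "card (U - S) < card U"
      using SU Sne finU by (intro psubset_card_mono) auto
    then have "card (U - S) \<le> card V - Suc t" using IH(3) by linarith
    then show ?thesis using sS SU IH(1,2) by auto
  qed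
qed

lemma finite_run:
  assumes finV: "finite V" and pd: "\<And>w. w \<in> V \<Longrightarrow> p w w = 0"
  shows "finite (set_pmf (pivot_run p V t))"
proof (rule finite_subset)
  show "set_pmf (pivot_run p V t) \<subseteq> Pow V \<times> Pow (Pow V)"
    using run_inv[of V p, OF finV pd] by fastforce
  show "finite (Pow V \<times> Pow (Pow V))" using finV by simp
qed


lemma telescope_step:
  fixes \<Phi> :: "'a set \<times> 'a set set \<Rightarrow> real" and g :: "'a set \<Rightarrow> 'a set \<Rightarrow> real"
  assumes finV: "finite V" and pd: "\<And>w. w \<in> V \<Longrightarrow> p w w = 0"
    and phi: "\<And>U C S. U \<subseteq> V \<Longrightarrow> (\<forall>T\<in>C. T \<subseteq> V \<and> T \<inter> U = {}) \<Longrightarrow> U \<noteq> {} \<Longrightarrow> S \<subseteq> U \<Longrightarrow>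
                 \<Phi> (U - S, insert S C) = \<Phi> (U, C) + g U S"
    and g0: "g {} {} = 0"
  shows "measure_pmf.expectation (pivot_run p V (Suc t)) \<Phi>
       = measure_pmf.expectation (pivot_run p V t) \<Phi>
         + measure_pmf.expectation (pivot_run p V t) (\<lambda>(U, C). measure_pmf.expectation (pivot_step p U) (g U))"
proof -
  define A where "A = set_pmf (pivot_run p V t)"
  have finA: "finite A" unfolding A_def by (rule finite_run[of V p, OF finV pd])
  define K where "K = (\<lambda>(U, C). if U = {} then return_pmf (U, C)
     else map_pmf (\<lambda>S. (U - S, insert S C)) (pivot_step p U))"
  define G where "G = (\<lambda>(U::'a set, C::'a set set). measure_pmf.expectation (pivot_step p U) (g U))"
  have run: "pivot_run p V (Suc t) = pivot_run p V t \<bind> K" by (simp add: K_def)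
  have inv: "fst a \<subseteq> V \<and> (\<forall>T\<in>snd a. T \<subseteq> V \<and> T \<inter> fst a = {})" if "a \<in> A" for a
    using run_inv[of V p, OF finV pd] that unfolding A_def by blast
  have finK: "finite (set_pmf (K a))" if "a \<in> A" for a
  proof -
    obtain U C where a: "a = (U, C)" by (cases a)
    have "finite U" using inv[OF that] a finV by (auto intro: finite_subset)
    then show ?thesis by (auto simp: K_def a intro: finite_set_step)
  qed
  have KE: "measure_pmf.expectation (K a) \<Phi> = \<Phi> a + G a" if "a \<in> A" for a
  proof -
    obtain U C where a: "a = (U, C)" by (cases a)
    have UV: "U \<subseteq> V" and CU: "\<forall>T\<in>C. T \<subseteq> V \<and> T \<inter> U = {}" using inv[OF that] a by auto
    have finU: "finite U" using UV finV by (auto intro: finite_subset)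
    show ?thesis
    proof (cases "U = {}")
      case True
      then show ?thesis by (simp add: K_def G_def a pivot_step_def g0)
    next
      case False
      have "measure_pmf.expectation (K a) \<Phi> = measure_pmf.expectation (pivot_step p U) (\<lambda>S. \<Phi> (U - S, insert S C))"
        using False by (simp add: K_def a)
      also have "\<dots> = measure_pmf.expectation (pivot_step p U) (\<lambda>S. \<Phi> (U, C) + g U S)"
        by (intro integral_cong_AE AE_pmfI phi UV CU False set_step_sub[OF finU]) auto
      also have "\<dots> = \<Phi> (U, C) + measure_pmf.expectation (pivot_step p U) (g U)"
        by (subst Bochner_Integration.integral_add)
           (auto intro!: integrable_measure_pmf_finite finite_set_step finU)
      finally show ?thesis by (simp add: a G_def)
    qed
  qed
  have "measure_pmf.expectation (pivot_run p V (Suc t)) \<Phi> = (\<Sum>a\<in>A. pmf (pivot_run p V t) a *\<^sub>R measure_pmf.expectation (K a) \<Phi>)"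
    unfolding run by (rule pmf_expectation_bind[OF finA finK]) (auto simp: A_def)
  also have "\<dots> = (\<Sum>a\<in>A. pmf (pivot_run p V t) a *\<^sub>R \<Phi> a) + (\<Sum>a\<in>A. pmf (pivot_run p V t) a *\<^sub>R G a)"
    by (simp add: KE sum.distrib algebra_simps cong: sum.cong)
  also have "(\<Sum>a\<in>A. pmf (pivot_run p V t) a *\<^sub>R \<Phi> a) = measure_pmf.expectation (pivot_run p V t) \<Phi>"
    by (rule integral_measure_pmf[OF finA, symmetric]) (auto simp: A_def)
  also have "(\<Sum>a\<in>A. pmf (pivot_run p V t) a *\<^sub>R G a) = measure_pmf.expectation (pivot_run p V t) G"
    by (rule integral_measure_pmf[OF finA, symmetric]) (auto simp: A_def)
  finally show ?thesis by (simp add: G_def)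
qed

lemma telescope:
  fixes \<Phi> :: "'a set \<times> 'a set set \<Rightarrow> real" and g :: "'a set \<Rightarrow> 'a set \<Rightarrow> real"
  assumes finV: "finite V" and pd: "\<And>w. w \<in> V \<Longrightarrow> p w w = 0"
    and phi: "\<And>U C S. U \<subseteq> V \<Longrightarrow> (\<forall>T\<in>C. T \<subseteq> V \<and> T \<inter> U = {}) \<Longrightarrow> U \<noteq> {} \<Longrightarrow> S \<subseteq> U \<Longrightarrow>
                 \<Phi> (U - S, insert S C) = \<Phi> (U, C) + g U S"
    and g0: "g {} {} = 0"
  shows "measure_pmf.expectation (pivot_run p V t) \<Phi>
       = \<Phi> (V, {}) + (\<Sum>s<t. measure_pmf.expectation (pivot_run p V s) (\<lambda>(U, C). measure_pmf.expectation (pivot_step p U) (g U)))"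
proof (induction t)
  case 0
  then show ?case by simp
next
  case (Suc t)
  show ?case
    by (subst telescope_step[of V p \<Phi> g, OF finV pd phi g0]) (simp_all add: Suc.IH)
qed


definition tog :: "'a set set \<Rightarrow> 'a \<Rightarrow> 'a \<Rightarrow> bool" where
  "tog C u v \<longleftrightarrow> (\<exists>S\<in>C. u \<in> S \<and> v \<in> S)"

definition Apot :: "('a \<Rightarrow> 'a \<Rightarrow> bool) \<Rightarrow> ('a \<Rightarrow> 'a \<Rightarrow> bool) \<Rightarrow> 'a set \<Rightarrow> 'a set \<times> 'a set set \<Rightarrow> real" where
  "Apot pos neg V = (\<lambda>(U, C). (\<Sum>(u,v)\<in>offdiag V.
      (if pos u v \<and> \<not> (u \<in> U \<and> v \<in> U) \<and> \<not> tog C u v then 1 else 0)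
    + (if neg u v \<and> tog C u v then 1 else 0)) / 2)"

definition Lpot :: "('a \<Rightarrow> 'a \<Rightarrow> bool) \<Rightarrow> ('a \<Rightarrow> 'a \<Rightarrow> bool) \<Rightarrow> ('a \<Rightarrow> 'a \<Rightarrow> real) \<Rightarrow> 'a set \<Rightarrow> 'a set \<times> 'a set set \<Rightarrow> real" where
  "Lpot pos neg x V = (\<lambda>(U, C). (\<Sum>(u,v)\<in>offdiag V.
      if \<not> (u \<in> U \<and> v \<in> U) then (if pos u v then x u v else if neg u v then 1 - x u v else 0) else 0) / 2)"

lemma offdiag_filter: "U \<subseteq> V \<Longrightarrow> offdiag U = {z \<in> offdiag V. fst z \<in> U \<and> snd z \<in> U}"
  by (auto simp: offdiag_def)

lemma tog_insert: "tog (insert S C) u v \<longleftrightarrow> (u \<in> S \<and> v \<in> S) \<or> tog C u v"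
  by (auto simp: tog_def)

lemma Apot_step:
  assumes fin: "finite V" and UV: "U \<subseteq> V" and CU: "\<forall>T\<in>C. T \<subseteq> V \<and> T \<inter> U = {}" and SU: "S \<subseteq> U"
  shows "Apot pos neg V (U - S, insert S C) = Apot pos neg V (U, C) + alg_step pos neg U S"
proof -
  have "alg_step pos neg U S = (\<Sum>z\<in>offdiag V. if fst z \<in> U \<and> snd z \<in> U then
      (case z of (u,v) \<Rightarrow> (if pos u v \<and> ((u \<in> S) \<noteq> (v \<in> S)) then 1 else 0)
      + (if neg u v \<and> u \<in> S \<and> v \<in> S then 1 else 0)) else 0) / 2"
    unfolding alg_step_def offdiag_filter[OF UV]
    by (subst sum.inter_filter) (auto simp: fin offdiag_def intro: finite_subset[of _ "V \<times> V"])
  moreover have "(\<Sum>(u,v)\<in>offdiag V.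
      (if pos u v \<and> \<not> (u \<in> U - S \<and> v \<in> U - S) \<and> \<not> tog (insert S C) u v then 1 else 0)
    + (if neg u v \<and> tog (insert S C) u v then 1 else 0)) =
     (\<Sum>(u,v)\<in>offdiag V.
      (if pos u v \<and> \<not> (u \<in> U \<and> v \<in> U) \<and> \<not> tog C u v then 1 else 0)
    + (if neg u v \<and> tog C u v then 1 else 0)) +
     (\<Sum>z\<in>offdiag V. if fst z \<in> U \<and> snd z \<in> U then
      (case z of (u,v) \<Rightarrow> (if pos u v \<and> ((u \<in> S) \<noteq> (v \<in> S)) then 1 else 0)
      + (if neg u v \<and> u \<in> S \<and> v \<in> S then 1 else 0)) else (0::real))"
    unfolding sum.distrib[symmetric]
  proof (intro sum.cong refl)
    fix z assume "z \<in> offdiag V"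
    obtain u v where z: "z = (u,v)" by (cases z)
    have d: "u \<in> U \<Longrightarrow> \<not> tog C u v" "v \<in> U \<Longrightarrow> \<not> tog C u v" using CU by (auto simp: tog_def)
    show "(case z of (u,v) \<Rightarrow> (if pos u v \<and> \<not> (u \<in> U - S \<and> v \<in> U - S) \<and> \<not> tog (insert S C) u v then 1 else 0)
    + (if neg u v \<and> tog (insert S C) u v then 1 else 0)) =
     (case z of (u,v) \<Rightarrow> (if pos u v \<and> \<not> (u \<in> U \<and> v \<in> U) \<and> \<not> tog C u v then 1 else 0)
    + (if neg u v \<and> tog C u v then 1 else 0)) +
     (if fst z \<in> U \<and> snd z \<in> U then
      (case z of (u,v) \<Rightarrow> (if pos u v \<and> ((u \<in> S) \<noteq> (v \<in> S)) then 1 else 0)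
      + (if neg u v \<and> u \<in> S \<and> v \<in> S then 1 else 0)) else (0::real))"
      unfolding z tog_insert using SU d
      by (cases "u \<in> U"; cases "v \<in> U"; cases "u \<in> S"; cases "v \<in> S") auto
  qed
  ultimately show ?thesis unfolding Apot_def prod.case by (simp only: add_divide_distrib)
qed

lemma Lpot_step:
  assumes fin: "finite V" and UV: "U \<subseteq> V" and SU: "S \<subseteq> U"
  shows "Lpot pos neg x V (U - S, insert S C) = Lpot pos neg x V (U, C) + lp_step pos neg x U S"
proof -
  have "lp_step pos neg x U S = (\<Sum>z\<in>offdiag V. if fst z \<in> U \<and> snd z \<in> U then
      (case z of (u,v) \<Rightarrow> if u \<in> S \<or> v \<in> S then
          (if pos u v then x u v else if neg u v then 1 - x u v else 0) else 0) else 0) / 2"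
    unfolding lp_step_def offdiag_filter[OF UV]
    by (subst sum.inter_filter) (auto simp: fin offdiag_def intro: finite_subset[of _ "V \<times> V"])
  moreover have "(\<Sum>(u,v)\<in>offdiag V.
      if \<not> (u \<in> U - S \<and> v \<in> U - S) then (if pos u v then x u v else if neg u v then 1 - x u v else 0) else 0) =
     (\<Sum>(u,v)\<in>offdiag V.
      if \<not> (u \<in> U \<and> v \<in> U) then (if pos u v then x u v else if neg u v then 1 - x u v else 0) else 0) +
     (\<Sum>z\<in>offdiag V. if fst z \<in> U \<and> snd z \<in> U then
      (case z of (u,v) \<Rightarrow> if u \<in> S \<or> v \<in> S then
          (if pos u v then x u v else if neg u v then 1 - x u v else 0) else 0) else 0)"
    unfolding sum.distrib[symmetric]
    by (intro sum.cong refl) (use SU in auto)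
  ultimately show ?thesis unfolding Lpot_def prod.case by (simp only: add_divide_distrib)
qed


theorem lemma1:
  fixes V :: "'a set"
    and pos neg :: "'a \<Rightarrow> 'a \<Rightarrow> bool"
    and x :: "'a \<Rightarrow> 'a \<Rightarrow> real"
    and fp fm fo :: "real \<Rightarrow> real"
    and \<alpha> :: real
  assumes finV: "finite V"
    and pos_sym: "\<And>u v. u \<in> V \<Longrightarrow> v \<in> V \<Longrightarrow> pos u v = pos v u"
    and neg_sym: "\<And>u v. u \<in> V \<Longrightarrow> v \<in> V \<Longrightarrow> neg u v = neg v u"
    and disj: "\<And>u v. u \<in> V \<Longrightarrow> v \<in> V \<Longrightarrow> \<not> (pos u v \<and> neg u v)"
    and neg_irrefl: "\<And>u. u \<in> V \<Longrightarrow> \<not> neg u u"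
    and fp_range: "\<And>y. 0 \<le> y \<Longrightarrow> y \<le> 1 \<Longrightarrow> 0 \<le> fp y \<and> fp y \<le> 1"
    and fm_range: "\<And>y. 0 \<le> y \<Longrightarrow> y \<le> 1 \<Longrightarrow> 0 \<le> fm y \<and> fm y \<le> 1"
    and fo_range: "\<And>y. 0 \<le> y \<Longrightarrow> y \<le> 1 \<Longrightarrow> 0 \<le> fo y \<and> fo y \<le> 1"
    and f0: "fp 0 = 0" "fm 0 = 0" "fo 0 = 0"
    and feas: "lp_feasible V x"
    and alpha_pos: "\<alpha> > 0"
    and tri: "\<And>u v w. u \<in> V \<Longrightarrow> v \<in> V \<Longrightarrow> w \<in> V \<Longrightarrow>
       ALG3 (prob_p fp fm fo pos neg x) pos neg u v w
         \<le> \<alpha> * LP3 (prob_p fp fm fo pos neg x) pos neg x u v w"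
  shows "(\<forall>t. exp_alg (prob_p fp fm fo pos neg x) pos neg V t
              \<le> \<alpha> * exp_lp (prob_p fp fm fo pos neg x) pos neg x V t)
       \<and> measure_pmf.expectation (pivot_output (prob_p fp fm fo pos neg x) V)
           (cluster_cost pos neg V)
         \<le> \<alpha> * lp_obj pos neg x V"
proof -
  define p where "p = prob_p fp fm fo pos neg x"
  have xr: "0 \<le> x u v \<and> x u v \<le> 1" if "u \<in> V" "v \<in> V" for u v
    using feas that by (auto simp: lp_feasible_def)
  have x0: "x u u = 0" if "u \<in> V" for u
    using feas that by (auto simp: lp_feasible_def)
  have pr: "0 \<le> p u w \<and> p u w \<le> 1" if "u \<in> V" "w \<in> V" for u w
    using xr[OF that] fp_range fm_range fo_range by (auto simp: p_def prob_p_def)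
  have pd: "p w w = 0" if "w \<in> V" for w
    using x0[OF that] f0 by (auto simp: p_def prob_p_def)
  have diag: "elp p pos neg x w u u = 0" if "u \<in> V" for u w
    using x0[OF that] neg_irrefl[OF that] by (auto simp: elp_def)
  define F where "F = (\<lambda>(U::'a set, C::'a set set). measure_pmf.expectation (pivot_step p U) (alg_step pos neg U))"
  define G where "G = (\<lambda>(U::'a set, C::'a set set). measure_pmf.expectation (pivot_step p U) (lp_step pos neg x U))"
  have ea: "exp_alg p pos neg V t = measure_pmf.expectation (pivot_run p V t) F" for t
    by (simp add: exp_alg_def F_def)
  have el: "exp_lp p pos neg x V t = measure_pmf.expectation (pivot_run p V t) G" for t
    by (simp add: exp_lp_def G_def)
  have int: "integrable (measure_pmf (pivot_run p V t)) f" for t and f :: "_ \<Rightarrow> real"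
    by (intro integrable_measure_pmf_finite finite_run[of V p, OF finV pd])
  have part1: "exp_alg p pos neg V t \<le> \<alpha> * exp_lp p pos neg x V t" for t
  proof -
    have "measure_pmf.expectation (pivot_run p V t) F \<le> measure_pmf.expectation (pivot_run p V t) (\<lambda>a. \<alpha> * G a)"
    proof (intro integral_mono_AE int AE_pmfI)
      fix a assume a: "a \<in> set_pmf (pivot_run p V t)"
      obtain U C where aUC: "a = (U, C)" by (cases a)
      have UV: "fst a \<subseteq> V" using run_inv[of V p, OF finV pd a] by blast
      then have UV': "U \<subseteq> V" using aUC by simp
      show "F a \<le> \<alpha> * G a" unfolding aUC F_def G_def prod.case
        apply (rule step_ineq)
        apply (rule finite_subset[OF UV' finV])
        using pr UV' apply blast
        using disj UV' apply blast
        using diag UV' apply blast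
        using tri UV' unfolding p_def apply blast
        done
    qed
    then show ?thesis by (simp add: ea el)
  qed
  have telA: "measure_pmf.expectation (pivot_run p V t) (Apot pos neg V) = (\<Sum>s<t. exp_alg p pos neg V s)" for t
  proof -
    have "measure_pmf.expectation (pivot_run p V t) (Apot pos neg V)
       = Apot pos neg V (V, {}) + (\<Sum>s<t. measure_pmf.expectation (pivot_run p V s) (\<lambda>(U, C). measure_pmf.expectation (pivot_step p U) (alg_step pos neg U)))"
      apply (rule telescope[of V p "Apot pos neg V" "alg_step pos neg", OF finV])
      subgoal by (rule pd)
      subgoal by (rule Apot_step[OF finV]) auto
      subgoal by (simp add: alg_step_def offdiag_def)
      done
    moreover have "Apot pos neg V (V, {}) = 0"
      by (simp add: Apot_def tog_def offdiag_def case_prod_unfold)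
    ultimately show ?thesis by (simp add: exp_alg_def)
  qed
  have telL: "measure_pmf.expectation (pivot_run p V t) (Lpot pos neg x V) = (\<Sum>s<t. exp_lp p pos neg x V s)" for t
  proof -
    have "measure_pmf.expectation (pivot_run p V t) (Lpot pos neg x V)
       = Lpot pos neg x V (V, {}) + (\<Sum>s<t. measure_pmf.expectation (pivot_run p V s) (\<lambda>(U, C). measure_pmf.expectation (pivot_step p U) (lp_step pos neg x U)))"
      apply (rule telescope[of V p "Lpot pos neg x V" "lp_step pos neg x", OF finV])
      subgoal by (rule pd)
      subgoal by (rule Lpot_step[OF finV]) auto
      subgoal by (simp add: lp_step_def offdiag_def)
      done
    moreover have "Lpot pos neg x V (V, {}) = 0"
      by (simp add: Lpot_def offdiag_def case_prod_unfold)
    ultimately show ?thesis by (simp add: exp_lp_def)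
  qed
  let ?n = "card V"
  have cost_eq: "measure_pmf.expectation (pivot_output p V) (cluster_cost pos neg V)
      = measure_pmf.expectation (pivot_run p V ?n) (Apot pos neg V)"
    unfolding pivot_output_def integral_map_pmf
  proof (intro integral_cong_AE AE_pmfI refl)
    fix a assume a: "a \<in> set_pmf (pivot_run p V ?n)"
    obtain U C where aUC: "a = (U, C)" by (cases a)
    have "fst a \<subseteq> V" "card (fst a) \<le> 0" using run_inv[of V p, OF finV pd a] by auto
    then have "U \<subseteq> V" "card U = 0" using aUC by auto
    then have "U = {}" using finV by (metis card_0_eq finite_subset)
    then show "cluster_cost pos neg V (snd a) = Apot pos neg V a"
      by (simp add: aUC cluster_cost_def Apot_def tog_def)
  qed simp_all
  have Lbound: "measure_pmf.expectation (pivot_run p V ?n) (Lpot pos neg x V) \<le> lp_obj pos neg x V"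
  proof -
    have "measure_pmf.expectation (pivot_run p V ?n) (Lpot pos neg x V)
        \<le> measure_pmf.expectation (pivot_run p V ?n) (\<lambda>_. lp_obj pos neg x V)"
    proof (intro integral_mono_AE int AE_pmfI)
      fix a :: "'a set \<times> 'a set set"
      obtain U C where aUC: "a = (U, C)" by (cases a)
      show "Lpot pos neg x V a \<le> lp_obj pos neg x V"
        unfolding aUC Lpot_def lp_obj_def prod.case
        by (intro divide_right_mono sum_mono) (auto simp: offdiag_def dest: xr)
    qed
    then show ?thesis by simp
  qed
  have "measure_pmf.expectation (pivot_output p V) (cluster_cost pos neg V) = (\<Sum>s<?n. exp_alg p pos neg V s)"
    using cost_eq telA by simp
  also have "\<dots> \<le> (\<Sum>s<?n. \<alpha> * exp_lp p pos neg x V s)"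
    by (intro sum_mono part1)
  also have "\<dots> = \<alpha> * measure_pmf.expectation (pivot_run p V ?n) (Lpot pos neg x V)"
    by (simp add: telL sum_distrib_left)
  also have "\<dots> \<le> \<alpha> * lp_obj pos neg x V"
    using Lbound alpha_pos by (intro mult_left_mono) auto
  finally have part2: "measure_pmf.expectation (pivot_output p V) (cluster_cost pos neg V) \<le> \<alpha> * lp_obj pos neg x V" .
  show ?thesis using part1 part2 unfolding p_def by blast
qed

end
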